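(* Let $D$ be a strong nonseparable digraph, let $H$ be a strong nonseparable subdigraph of $D$, and let $P=(x_0,x_1,\ldots,x_{r-1},x_r)$ be an ear of $H$ in $D$ with length $l(P)=r\geq 2$. If $H$ has no kernel and $H'=H\cup P$ has a kernel $N'$, then one of the following holds: (1) $x_0\notin N'$, $x_r\in N'$ and $l(P)$ is odd; (2) $x_0,x_r\notin N'$ and $l(P)$ is even.
   Context: All digraphs are finite, without loops or multiple arcs. Paths and cycles are directed; the length of a path is its number of arcs. A digraph is strong if for every ordered pair of vertices $x,y$ there is a directed path from $x$ to $y$; it is nonseparable if its underlying undirected graph is nonseparable (has no cut vertex). For a subdigraph $H$ of $D$, an ear of $H$ in $D$ is a directed path $(x_0,\ldots,x_r)$ in $D$ whose end vertices $x_0,x_r$ lie in $H$ and whose internal vertices $x_1,\ldots,x_{r-1}$ do not lie in $H$ (or a directed cycle with exactly one vertex $x_0=x_r$ in $H$). A kernel of a digraph is a set $N$ of vertices that is independent (no arc between two of its vertices) and absorbent (every vertex not in $N$ has an out-neighbour in $N$). *)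

theory Defs
  imports Main
begin

text \<open>A digraph is given by a vertex set V and an arc relation A: finite, loopless,
  arcs between vertices (multiple arcs are impossible in a relation).\<close>
definition digraph :: "'a set \<Rightarrow> ('a \<times> 'a) set \<Rightarrow> bool" where
  "digraph V A \<longleftrightarrow> finite V \<and> A \<subseteq> V \<times> V \<and> (\<forall>x. (x, x) \<notin> A)"

definition subdigraph :: "'a set \<Rightarrow> ('a \<times> 'a) set \<Rightarrow> 'a set \<Rightarrow> ('a \<times> 'a) set \<Rightarrow> bool" where
  "subdigraph VH AH V A \<longleftrightarrow> digraph VH AH \<and> VH \<subseteq> V \<and> AH \<subseteq> A"

definition strong :: "'a set \<Rightarrow> ('a \<times> 'a) set \<Rightarrow> bool" where
  "strong V A \<longleftrightarrow> (\<forall>x\<in>V. \<forall>y\<in>V. (x, y) \<in> A\<^sup>*)"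

definition und_connected_on :: "'a set \<Rightarrow> ('a \<times> 'a) set \<Rightarrow> bool" where
  "und_connected_on S A \<longleftrightarrow>
     (\<forall>x\<in>S. \<forall>y\<in>S. (x, y) \<in> ((A \<union> A\<inverse>) \<inter> (S \<times> S))\<^sup>*)"

definition nonseparable :: "'a set \<Rightarrow> ('a \<times> 'a) set \<Rightarrow> bool" where
  "nonseparable V A \<longleftrightarrow> und_connected_on V A \<and> (\<forall>v\<in>V. und_connected_on (V - {v}) A)"

text \<open>Ear of H = (VH, AH) in D = (V, A), given as the vertex list [x_0, ..., x_r]:
  a directed path of D (or a directed cycle through exactly one vertex of H).\<close>
definition is_ear :: "'a set \<Rightarrow> ('a \<times> 'a) set \<Rightarrow> 'a set \<Rightarrow> 'a list \<Rightarrow> bool" where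
  "is_ear V A VH xs \<longleftrightarrow>
     length xs \<ge> 2 \<and>
     (\<forall>i. i + 1 < length xs \<longrightarrow> (xs ! i, xs ! (i + 1)) \<in> A) \<and>
     hd xs \<in> VH \<and> last xs \<in> VH \<and>
     (\<forall>i. 0 < i \<and> i + 1 < length xs \<longrightarrow> xs ! i \<notin> VH) \<and>
     (distinct xs \<or> (hd xs = last xs \<and> distinct (tl xs)))"

definition path_arcs :: "'a list \<Rightarrow> ('a \<times> 'a) set" where
  "path_arcs xs = {(xs ! i, xs ! (i + 1)) | i. i + 1 < length xs}"

definition path_length :: "'a list \<Rightarrow> nat" where
  "path_length xs = length xs - 1"

definition kernel :: "'a set \<Rightarrow> ('a \<times> 'a) set \<Rightarrow> 'a set \<Rightarrow> bool" where
  "kernel V A N \<longleftrightarrow> N \<subseteq> V \<and>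
     (\<forall>x\<in>N. \<forall>y\<in>N. (x, y) \<notin> A) \<and>
     (\<forall>x\<in>V - N. \<exists>y\<in>N. (x, y) \<in> A)"

definition has_kernel :: "'a set \<Rightarrow> ('a \<times> 'a) set \<Rightarrow> bool" where
  "has_kernel V A \<longleftrightarrow> (\<exists>N. kernel V A N)"

end

theory Submission
  imports Defs
begin

theorem mainTheorem5:
  fixes V :: "'a set" and A :: "('a \<times> 'a) set"
    and VH :: "'a set" and AH :: "('a \<times> 'a) set"
    and xs :: "'a list" and N' :: "'a set"
  assumes "digraph V A" and "strong V A" and "nonseparable V A"
    and "subdigraph VH AH V A" and "strong VH AH" and "nonseparable VH AH"
    and "is_ear V A VH xs" and "path_length xs \<ge> 2"
    and "\<not> has_kernel VH AH"
    and "kernel (VH \<union> set xs) (AH \<union> path_arcs xs) N'"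
  shows "(hd xs \<notin> N' \<and> last xs \<in> N' \<and> odd (path_length xs)) \<or>
         (hd xs \<notin> N' \<and> last xs \<notin> N' \<and> even (path_length xs))"
proof -
  define n where "n = length xs"
  have n3: "n \<ge> 3" using assms(8) unfolding path_length_def n_def by simp
  have AHsub: "AH \<subseteq> VH \<times> VH" using assms(4) unfolding subdigraph_def digraph_def by auto
  have xne: "xs \<noteq> []" using n3 n_def by auto
  have x0: "xs ! 0 \<in> VH" using assms(7) hd_conv_nth[OF xne] unfolding is_ear_def by simp
  have inner: "\<And>i. 0 < i \<Longrightarrow> i + 1 < n \<Longrightarrow> xs ! i \<notin> VH"
    using assms(7) unfolding is_ear_def n_def by blast
  have dist: "distinct xs \<or> distinct (tl xs)" using assms(7) unfolding is_ear_def by blast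
  have K: "N' \<subseteq> VH \<union> set xs" "\<And>x y. x \<in> N' \<Longrightarrow> y \<in> N' \<Longrightarrow> (x, y) \<notin> AH \<union> path_arcs xs"
    "\<And>x. x \<in> VH \<union> set xs \<Longrightarrow> x \<notin> N' \<Longrightarrow> \<exists>y\<in>N'. (x, y) \<in> AH \<union> path_arcs xs"
    using assms(10) unfolding kernel_def by (meson, meson, meson DiffI)
  have pa: "(u, v) \<in> path_arcs xs \<longleftrightarrow> (\<exists>j. u = xs ! j \<and> v = xs ! (j+1) \<and> j + 1 < n)" for u v
    unfolding path_arcs_def n_def by auto
  have claim: "kernel VH AH (N' \<inter> VH)" if h: "xs ! 0 \<in> N' \<or> (\<exists>y\<in>N'. (xs ! 0, y) \<in> AH)"
    unfolding kernel_def
  proof (intro conjI ballI)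
    show "N' \<inter> VH \<subseteq> VH" by auto
  next
    fix x y assume "x \<in> N' \<inter> VH" "y \<in> N' \<inter> VH"
    then show "(x, y) \<notin> AH" using K(2) by blast
  next
    fix v assume v: "v \<in> VH - N' \<inter> VH"
    show "\<exists>y\<in>N' \<inter> VH. (v, y) \<in> AH"
    proof (cases "v = xs ! 0")
      case True
      then show ?thesis using h v AHsub by blast
    next
      case False
      obtain y where y: "y \<in> N'" "(v, y) \<in> AH \<union> path_arcs xs" using K(3)[of v] v by blast
      have "(v, y) \<notin> path_arcs xs"
      proof
        assume "(v, y) \<in> path_arcs xs"
        then obtain j where j: "v = xs ! j" "j + 1 < n" using pa by blast
        show False
        proof (cases "j = 0")
          case True then show ?thesis using j False by simp
        next
          case False then show ?thesis using inner[of j] j v by simp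
        qed
      qed
      then show ?thesis using y AHsub by blast
    qed
  qed
  have nk: "\<not> (xs ! 0 \<in> N' \<or> (\<exists>y\<in>N'. (xs ! 0, y) \<in> AH))"
    using claim assms(9) unfolding has_kernel_def by blast
  have F1: "xs ! 0 \<notin> N'" using nk by blast
  have F2: "xs ! 1 \<in> N'"
  proof -
    obtain y where y: "y \<in> N'" "(xs ! 0, y) \<in> AH \<union> path_arcs xs" using K(3)[of "xs ! 0"] x0 F1 by blast
    then have "(xs ! 0, y) \<in> path_arcs xs" using nk by blast
    then obtain j where j: "xs ! 0 = xs ! j" "y = xs ! (j+1)" "j + 1 < n" using pa by blast
    have "j = 0"
    proof (rule ccontr)
      assume "j \<noteq> 0"
      then have "xs ! j \<notin> VH" using inner[of j] j(3) by simp
      then show False using j(1) x0 by simp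
    qed
    then show ?thesis using j y by simp
  qed
  have uniq: "y = xs ! (i+1)" if hy: "0 < i" "i + 1 < n" "(xs ! i, y) \<in> AH \<union> path_arcs xs" for i y
  proof -
    have "(xs ! i, y) \<notin> AH" using inner[OF hy(1,2)] AHsub by blast
    then obtain j where j: "xs ! i = xs ! j" "y = xs ! (j+1)" "j + 1 < n" using pa hy(3) by blast
    have "j \<noteq> 0" using j(1) x0 inner[OF hy(1,2)] by (metis)
    have "j = i"
      using dist
    proof
      assume "distinct xs" then show ?thesis using j hy n_def nth_eq_iff_index_eq by fastforce
    next
      assume d: "distinct (tl xs)"
      have e1: "tl xs ! (i - 1) = xs ! i" using hy n_def nth_tl[of "i - 1" xs] by simp
      have e2: "tl xs ! (j - 1) = xs ! j" using j(3) \<open>j \<noteq> 0\<close> n_def nth_tl[of "j - 1" xs] by simp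
      have "tl xs ! (i - 1) = tl xs ! (j - 1)" using e1 e2 j(1) by simp
      then have "i - 1 = j - 1" using d nth_eq_iff_index_eq[OF d] j hy n_def by simp
      then show ?thesis using hy \<open>j \<noteq> 0\<close> by simp
    qed
    then show ?thesis using j by simp
  qed
  have F3: "xs ! i \<in> N' \<longleftrightarrow> xs ! (i+1) \<notin> N'" if "0 < i" "i + 1 < n" for i
  proof
    assume "xs ! i \<in> N'"
    moreover have "(xs ! i, xs ! (i+1)) \<in> path_arcs xs" using pa that by blast
    ultimately show "xs ! (i+1) \<notin> N'" using K(2) by blast
  next
    assume a: "xs ! (i+1) \<notin> N'"
    show "xs ! i \<in> N'"
    proof (rule ccontr)
      assume "xs ! i \<notin> N'"
      moreover have "xs ! i \<in> set xs" using that n_def by simp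
      ultimately obtain y where "y \<in> N'" "(xs ! i, y) \<in> AH \<union> path_arcs xs" using K(3) by blast
      then show False using uniq[OF that] a by simp
    qed
  qed
  have par: "1 \<le> i \<Longrightarrow> i < n \<Longrightarrow> (xs ! i \<in> N' \<longleftrightarrow> odd i)" for i
  proof (induction i)
    case 0 then show ?case by simp
  next
    case (Suc k)
    show ?case
    proof (cases "k = 0")
      case True then show ?thesis using F2 by simp
    next
      case False
      then show ?thesis using Suc F3[of k] by simp
    qed
  qed
  have hd: "hd xs = xs ! 0" using hd_conv_nth[OF xne] .
  have lst: "last xs = xs ! (n - 1)" using last_conv_nth[OF xne] n_def by simp
  have pl: "path_length xs = n - 1" unfolding path_length_def n_def by simp
  show ?thesis using par[of "n - 1"] n3 F1 hd lst pl by auto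
qed

end
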